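(* Let $\mathcal{F}\subset K[x_1,\ldots,x_n]$ be a chordal polynomial set with $x_1<\cdots<x_n$ as a perfect elimination ordering. Then every node $(\mathcal{P},\mathcal{Q},i)$ of the Wang decomposition tree $\mathcal{N}(\mathcal{F})$ satisfies $G(\mathcal{P})\subseteq G(\mathcal{F})$.
   Context: Let $K$ be a field and $K[x_1,\ldots,x_n]$ the polynomial ring, with the variables ordered $x_1<\cdots<x_n$. For a polynomial $F$, $\mathrm{supp}(F)$ is the set of variables effectively appearing in $F$. For a set of polynomials $\mathcal{P}$, $\mathrm{supp}(\mathcal{P})=\bigcup_{F\in\mathcal{P}}\mathrm{supp}(F)$. For a nonconstant $F$, $\mathrm{lv}(F)$ is the greatest variable in $\mathrm{supp}(F)$. For a polynomial set $\mathcal{P}$ and $1\le i\le n$, $\mathcal{P}^{(i)}=\{P\in\mathcal{P}:\mathrm{lv}(P)=x_i\}$; constants belong to no $\mathcal{P}^{(i)}$. The associated graph $G(\mathcal{P})$ is the undirected graph whose vertex set is $\mathrm{supp}(\mathcal{P})$, with an edge between distinct $x_i,x_j$ iff some $F\in\mathcal{P}$ has $x_i,x_j\in\mathrm{supp}(F)$. For graphs, $G\subseteq G'$ means that $G$ is a subgraph of $G'$, i.e. both the vertex set and the edge set are contained. An ordering of the vertices of a graph is a perfect elimination ordering if, for every vertex $v$, the set consisting of $v$ and all neighbours of $v$ smaller than $v$ is a clique. A polynomial set $\mathcal{P}$ is called chordal with $x_1<\cdots<x_n$ as a perfect elimination ordering if the restriction of this ordering to $\mathrm{supp}(\mathcal{P})$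 is a perfect elimination ordering of $G(\mathcal{P})$. For a nonconstant polynomial $F$ with $\mathrm{lv}(F)=x_k$, write $F=I x_k^d+R$ with $d=\deg(F,x_k)$, $I\in K[x_1,\ldots,x_{k-1}]$, and $\deg(R,x_k)<d$. Then $\mathrm{ini}(F)=I$ is the initial of $F$ and $\mathrm{tail}(F)=R$ is the tail of $F$. For $\mathrm{lv}(T)=x_i$, $\mathrm{prem}(P,T)$ is the pseudo-remainder of $P$ by $T$ with respect to $x_i$. The zero polynomial has empty support. Wang's decomposition tree: $\mathcal{N}(\mathcal{F})$ is the smallest set of triples $(\mathcal{P},\mathcal{Q},i)$, where $\mathcal{P},\mathcal{Q}$ are polynomial sets and $0\le i\le n$, satisfying the following: - $(\mathcal{F},\emptyset,n)\in\mathcal{N}(\mathcal{F})$. - If $(\mathcal{P},\mathcal{Q},i)\in\mathcal{N}(\mathcal{F})$ with $i\ge1$ and $\#\mathcal{P}^{(i)}>1$, then for every $T\in\mathcal{P}^{(i)}$ of minimal degree in $x_i$ among the elements of $\mathcal{P}^{(i)}$, both of the following triples belong to $\mathcal{N}(\mathcal{F})$: - the left child $\big((\mathcal{P}\setminus\mathcal{P}^{(i)})\cup\{T\}\cup\{\mathrm{prem}(P,T):P\in\mathcal{P}^{(i)}\},\ \mathcal{Q}\cup\{\mathrm{ini}(T)\},\ i\big)$; - the right child $\big((\mathcal{P}\setminus\{T\})\cup\{\mathrm{ini}(T),\mathrm{tail}(T)\},\ \mathcal{Q},\ i\big)$. - If $(\mathcal{P},\mathcal{Q},i)\in\mathcal{N}(\mathcal{F})$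 with $i\ge1$ and $\#\mathcal{P}^{(i)}\le1$, then $(\mathcal{P},\mathcal{Q},i-1)\in\mathcal{N}(\mathcal{F})$. This set contains all triples occurring in Wang's method for triangular decomposition applied to $\mathcal{F}$. *)

theory Defs
  imports "HOL-Library.Poly_Mapping"
begin

(* Multivariate polynomials over a field: finitely supported maps from monomials
  (exponent vectors nat \<Rightarrow>0 nat, variable x_k has index k) to coefficients.
  The ordering x_1 < ... < x_n is the natural order of the indices. *)

type_synonym 'a mpoly = "(nat \<Rightarrow>\<^sub>0 nat) \<Rightarrow>\<^sub>0 'a"

definition var :: "nat \<Rightarrow> 'a::comm_ring_1 mpoly" where
  "var k = Poly_Mapping.single (Poly_Mapping.single k 1) 1"

definition vars :: "'a::zero mpoly \<Rightarrow> nat set" where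
  "vars F = (\<Union>m \<in> Poly_Mapping.keys F. Poly_Mapping.keys m)"

definition vars_set :: "'a::zero mpoly set \<Rightarrow> nat set" where
  "vars_set P = (\<Union>F\<in>P. vars F)"

(* leading variable (meaningful for nonconstant F) *)
definition lv :: "'a::zero mpoly \<Rightarrow> nat" where
  "lv F = Max (vars F)"

definition level :: "'a::zero mpoly set \<Rightarrow> nat \<Rightarrow> 'a mpoly set" where
  "level P i = {F \<in> P. vars F \<noteq> {} \<and> lv F = i}"

definition deg :: "'a::zero mpoly \<Rightarrow> nat \<Rightarrow> nat" where
  "deg F k = Max (insert 0 ((\<lambda>m. Poly_Mapping.lookup m k) ` Poly_Mapping.keys F))"

definition coeff_in :: "'a::comm_ring_1 mpoly \<Rightarrow> nat \<Rightarrow> nat \<Rightarrow> 'a mpoly" where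
  "coeff_in F k d = (\<Sum>m \<in> {m \<in> Poly_Mapping.keys F. Poly_Mapping.lookup m k = d}.
      Poly_Mapping.single (m - Poly_Mapping.single k d) (Poly_Mapping.lookup F m))"

definition ini :: "'a::comm_ring_1 mpoly \<Rightarrow> 'a mpoly" where
  "ini F = coeff_in F (lv F) (deg F (lv F))"

definition tail :: "'a::comm_ring_1 mpoly \<Rightarrow> 'a mpoly" where
  "tail F = F - ini F * var (lv F) ^ deg F (lv F)"

(* pseudo-remainder of P by T w.r.t. x_i = lv T: the unique R with
  ini(T)^(max(e-d+1,0)) P = Q T + R and deg(R,x_i) < d. *)
definition prem :: "'a::field mpoly \<Rightarrow> 'a mpoly \<Rightarrow> 'a mpoly" where
  "prem P T = (THE R. \<exists>Q. ini T ^ (deg P (lv T) + 1 - deg T (lv T)) * P = Q * T + R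
                         \<and> deg R (lv T) < deg T (lv T))"

(* Associated graph G(P) as (vertex set, edge set); edges as ordered pairs (symmetric). *)
definition graph_verts :: "'a::zero mpoly set \<Rightarrow> nat set" where
  "graph_verts P = vars_set P"

definition graph_edges :: "'a::zero mpoly set \<Rightarrow> (nat \<times> nat) set" where
  "graph_edges P = {(a, b). a \<noteq> b \<and> (\<exists>F\<in>P. a \<in> vars F \<and> b \<in> vars F)}"

definition subgraph_of :: "'a::zero mpoly set \<Rightarrow> 'a mpoly set \<Rightarrow> bool" where
  "subgraph_of P F \<longleftrightarrow> graph_verts P \<subseteq> graph_verts F \<and> graph_edges P \<subseteq> graph_edges F"

definition chordal_peo :: "'a::zero mpoly set \<Rightarrow> bool" where
  "chordal_peo P \<longleftrightarrow> (\<forall>v \<in> graph_verts P.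
     (let C = insert v {u. (u, v) \<in> graph_edges P \<and> u < v} in
      \<forall>a\<in>C. \<forall>b\<in>C. a \<noteq> b \<longrightarrow> (a, b) \<in> graph_edges P))"

inductive_set wang_tree :: "'a::field mpoly set \<Rightarrow> nat \<Rightarrow> ('a mpoly set \<times> 'a mpoly set \<times> nat) set"
  for F :: "'a mpoly set" and n :: nat where
  root: "(F, {}, n) \<in> wang_tree F n"
| left: "\<lbrakk>(P, Q, i) \<in> wang_tree F n; i \<ge> 1; card (level P i) > 1 \<or> infinite (level P i);
          T \<in> level P i; \<forall>P' \<in> level P i. deg T i \<le> deg P' i\<rbrakk>
         \<Longrightarrow> ((P - level P i) \<union> {T} \<union> {prem P' T | P'. P' \<in> level P i},
              Q \<union> {ini T}, i) \<in> wang_tree F n"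
| right: "\<lbrakk>(P, Q, i) \<in> wang_tree F n; i \<ge> 1; card (level P i) > 1 \<or> infinite (level P i);
          T \<in> level P i; \<forall>P' \<in> level P i. deg T i \<le> deg P' i\<rbrakk>
         \<Longrightarrow> ((P - {T}) \<union> {ini T, tail T}, Q, i) \<in> wang_tree F n"
| down: "\<lbrakk>(P, Q, i) \<in> wang_tree F n; i \<ge> 1; finite (level P i); card (level P i) \<le> 1\<rbrakk>
         \<Longrightarrow> (P, Q, i - 1) \<in> wang_tree F n"

end

theory Submission imports Defs begin


lemma lookup_mult_single_shift:
  fixes p :: "'a::comm_ring_1 mpoly"
  shows "Poly_Mapping.lookup (p * Poly_Mapping.single s 1) (m + s) = Poly_Mapping.lookup p m"
proof -
  have "Poly_Mapping.lookup (p * Poly_Mapping.single s 1) (m + s)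
      = (\<Sum>l. Poly_Mapping.lookup p l * (\<Sum>q. Poly_Mapping.lookup (Poly_Mapping.single s 1) q when m + s = l + q))"
    by (simp add: lookup_mult)
  also have "\<dots> = (\<Sum>l. Poly_Mapping.lookup p l when l = m)"
    apply (rule Sum_any.cong)
    apply (simp add: lookup_single when_def)
    apply (auto simp: mult_when)
    subgoal for a
    proof -
      assume "a \<noteq> m"
      then have "(\<lambda>aa. if m + s = a + aa then if s = aa then (1::'a) else 0 else 0) = (\<lambda>aa. 0)"
        by (auto simp: fun_eq_iff)
      then show ?thesis by (simp only: Sum_any.neutral mult_zero_right)
    qed
    done
  finally show ?thesis by simp
qed


lemma var_pow: "(var k :: 'a::comm_ring_1 mpoly) ^ j = Poly_Mapping.single (Poly_Mapping.single k j) 1"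
proof (induction j)
  case 0 then show ?case by simp
next
  case (Suc j)
  have "(var k :: 'a mpoly) ^ Suc j = var k * var k ^ j" by simp
  also have "\<dots> = Poly_Mapping.single (Poly_Mapping.single k 1) 1 * Poly_Mapping.single (Poly_Mapping.single k j) 1"
    unfolding Suc.IH by (simp only: var_def)
  also have "\<dots> = Poly_Mapping.single (Poly_Mapping.single k 1 + Poly_Mapping.single k j) 1"
    by (simp add: mult_single)
  also have "Poly_Mapping.single k 1 + Poly_Mapping.single k j = Poly_Mapping.single k (Suc j)"
    by (simp add: single_add[symmetric])
  finally show ?case .
qed

lemma keys_mult_lookup:
  fixes A B :: "'a::comm_ring_1 mpoly"
  assumes "m \<in> Poly_Mapping.keys (A * B)"
  shows "\<exists>a b. a \<in> Poly_Mapping.keys A \<and> b \<in> Poly_Mapping.keys B \<and> m = a + b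
    \<and> Poly_Mapping.lookup m k = Poly_Mapping.lookup a k + Poly_Mapping.lookup b k"
  using keys_mult[of A B] assms by (force simp: lookup_add)

lemma deg_le_iff: "deg F k \<le> d \<longleftrightarrow> (\<forall>m\<in>Poly_Mapping.keys F. Poly_Mapping.lookup m k \<le> d)"
  unfolding deg_def by (subst Max_le_iff) auto

lemma deg_ge: "m \<in> Poly_Mapping.keys F \<Longrightarrow> Poly_Mapping.lookup m k \<le> deg F k"
  unfolding deg_def by (rule Max_ge) auto

lemma deg_attained:
  assumes "F \<noteq> 0"
  shows "\<exists>m\<in>Poly_Mapping.keys F. Poly_Mapping.lookup m k = deg F k"
proof -
  obtain m0 where m0: "m0 \<in> Poly_Mapping.keys F" using assms by (metis keys_eq_empty ex_in_conv)
  have "deg F k \<in> insert 0 ((\<lambda>m. Poly_Mapping.lookup m k) ` Poly_Mapping.keys F)"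
    unfolding deg_def by (rule Max_in) auto
  then show ?thesis
  proof
    assume "deg F k = 0"
    then show ?thesis using deg_ge[OF m0, of k] m0 by auto
  qed auto
qed

lemma deg_zero[simp]: "deg 0 k = 0"
  unfolding deg_def by simp

lemma finite_vars: "finite (vars F)"
  unfolding vars_def by auto

lemma vars_add: "vars (A + B) \<subseteq> vars A \<union> vars B"
  unfolding vars_def using keys_add[of A B] by auto

lemma vars_diff: "vars (A - B) \<subseteq> vars A \<union> vars B"
  unfolding vars_def using keys_diff[of A B] by auto

lemma vars_mult: "vars ((A::'a::comm_ring_1 mpoly) * B) \<subseteq> vars A \<union> vars B"
proof
  fix x assume "x \<in> vars (A * B)"
  then obtain m where m: "m \<in> Poly_Mapping.keys (A * B)" "x \<in> Poly_Mapping.keys m"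
    unfolding vars_def by auto
  then obtain a b where "a \<in> Poly_Mapping.keys A" "b \<in> Poly_Mapping.keys B" "m = a + b"
    using keys_mult[of A B] by blast
  then show "x \<in> vars A \<union> vars B"
    using m(2) keys_add[of a b] unfolding vars_def by blast
qed

lemma vars_one[simp]: "vars (1::'a::comm_ring_1 mpoly) = {}"
  unfolding vars_def by simp

lemma vars_pow: "vars ((A::'a::comm_ring_1 mpoly) ^ n) \<subseteq> vars A"
  by (induction n) (use vars_mult in fastforce)+

lemma vars_sum: "vars (sum f S) \<subseteq> (\<Union>x\<in>S. vars (f x))"
  unfolding vars_def using keys_sum[of f S] by blast

lemma vars_single: "vars (Poly_Mapping.single m c) \<subseteq> Poly_Mapping.keys m"
  unfolding vars_def by auto

lemma vars_var_pow: "vars ((var k :: 'a::comm_ring_1 mpoly) ^ j) \<subseteq> {k}"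
  unfolding var_pow using vars_single[of "Poly_Mapping.single k j" "1::'a"] by (cases "j = 0") auto



lemma coeff_in_times:
  fixes F :: "'a::comm_ring_1 mpoly"
  shows "coeff_in F k d * var k ^ d =
    (\<Sum>m \<in> {m \<in> Poly_Mapping.keys F. Poly_Mapping.lookup m k = d}. Poly_Mapping.single m (Poly_Mapping.lookup F m))"
proof -
  have eq: "m - Poly_Mapping.single k d + Poly_Mapping.single k d = m"
    if "Poly_Mapping.lookup m k = d" for m :: "nat \<Rightarrow>\<^sub>0 nat"
    by (rule poly_mapping_eqI) (use that in \<open>auto simp: lookup_add lookup_minus lookup_single when_def\<close>)
  show ?thesis
    unfolding coeff_in_def var_pow sum_distrib_right
    by (rule sum.cong) (auto simp: mult_single eq)
qed

lemma lookup_top: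
  fixes F :: "'a::comm_ring_1 mpoly"
  shows "Poly_Mapping.lookup (coeff_in F k d * var k ^ d) m =
    (if Poly_Mapping.lookup m k = d then Poly_Mapping.lookup F m else 0)"
proof -
  have "Poly_Mapping.lookup (coeff_in F k d * var k ^ d) m =
     (\<Sum>m' \<in> {m \<in> Poly_Mapping.keys F. Poly_Mapping.lookup m k = d}. Poly_Mapping.lookup F m' when m' = m)"
    unfolding coeff_in_times lookup_sum by (simp add: lookup_single)
  also have "\<dots> = (if Poly_Mapping.lookup m k = d then Poly_Mapping.lookup F m else 0)"
    by (auto simp: when_def in_keys_iff)
  finally show ?thesis .
qed

lemma keys_coeff_in:
  fixes F :: "'a::comm_ring_1 mpoly"
  assumes "m \<in> Poly_Mapping.keys (coeff_in F k d)"
  shows "Poly_Mapping.lookup m k = 0"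
proof -
  have "m \<in> (\<Union>m'\<in>{m \<in> Poly_Mapping.keys F. Poly_Mapping.lookup m k = d}.
          Poly_Mapping.keys (Poly_Mapping.single (m' - Poly_Mapping.single k d) (Poly_Mapping.lookup F m')))"
    using assms keys_sum[of "\<lambda>m'. Poly_Mapping.single (m' - Poly_Mapping.single k d) (Poly_Mapping.lookup F m')"
       "{m \<in> Poly_Mapping.keys F. Poly_Mapping.lookup m k = d}"]
    unfolding coeff_in_def by blast
  then obtain m' where "Poly_Mapping.lookup m' k = d" "m = m' - Poly_Mapping.single k d"
    by (auto split: if_splits)
  then show ?thesis by (simp add: lookup_minus)
qed

lemma vars_coeff_in:
  fixes F :: "'a::comm_ring_1 mpoly"
  shows "vars (coeff_in F k d) \<subseteq> vars F"
proof -
  have "vars (coeff_in F k d) \<subseteq> (\<Union>m'\<in>{m \<in> Poly_Mapping.keys F. Poly_Mapping.lookup m k = d}.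
          vars (Poly_Mapping.single (m' - Poly_Mapping.single k d) (Poly_Mapping.lookup F m')))"
    unfolding coeff_in_def by (rule vars_sum)
  also have "\<dots> \<subseteq> vars F"
  proof (rule UN_least)
    fix m' assume "m' \<in> {m \<in> Poly_Mapping.keys F. Poly_Mapping.lookup m k = d}"
    then have "Poly_Mapping.keys (m' - Poly_Mapping.single k d) \<subseteq> vars F"
      unfolding vars_def by (auto simp: in_keys_iff lookup_minus)
    then show "vars (Poly_Mapping.single (m' - Poly_Mapping.single k d) (Poly_Mapping.lookup F m')) \<subseteq> vars F"
      using vars_single by blast
  qed
  finally show ?thesis .
qed

lemma coeff_in_nonzero:
  fixes F :: "'a::comm_ring_1 mpoly"
  assumes "F \<noteq> 0"
  shows "coeff_in F k (deg F k) \<noteq> 0"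
proof
  assume "coeff_in F k (deg F k) = 0"
  obtain m where m: "m \<in> Poly_Mapping.keys F" "Poly_Mapping.lookup m k = deg F k"
    using deg_attained[OF assms] by blast
  have "Poly_Mapping.lookup (coeff_in F k (deg F k) * var k ^ deg F k) m = Poly_Mapping.lookup F m"
    using m(2) by (simp add: lookup_top)
  then show False using m(1) \<open>coeff_in F k (deg F k) = 0\<close> by (simp add: in_keys_iff)
qed

lemma keys_rest:
  fixes F :: "'a::comm_ring_1 mpoly"
  assumes "m \<in> Poly_Mapping.keys (F - coeff_in F k (deg F k) * var k ^ deg F k)"
  shows "Poly_Mapping.lookup m k < deg F k"
proof -
  have "Poly_Mapping.lookup (F - coeff_in F k (deg F k) * var k ^ deg F k) m \<noteq> 0"
    using assms by (simp add: in_keys_iff)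
  then have "Poly_Mapping.lookup m k \<noteq> deg F k" "m \<in> Poly_Mapping.keys F"
    by (auto simp: lookup_minus lookup_top in_keys_iff split: if_splits)
  then show ?thesis using deg_ge[of m F k] by auto
qed

lemma keys_top:
  fixes F :: "'a::comm_ring_1 mpoly"
  assumes "m \<in> Poly_Mapping.keys (coeff_in F k d * var k ^ d)"
  shows "Poly_Mapping.lookup m k = d"
  using assms by (auto simp: lookup_top in_keys_iff split: if_splits)

lemma keys_var_pow:
  "m \<in> Poly_Mapping.keys ((var k :: 'a::comm_ring_1 mpoly) ^ j) \<Longrightarrow> Poly_Mapping.lookup m k = j"
  unfolding var_pow by (auto split: if_splits)

lemma keys_pow_free:
  fixes I :: "'a::comm_ring_1 mpoly"
  assumes "\<forall>m\<in>Poly_Mapping.keys I. Poly_Mapping.lookup m k = 0"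
  shows "m \<in> Poly_Mapping.keys (I ^ N) \<Longrightarrow> Poly_Mapping.lookup m k = 0"
proof (induction N arbitrary: m)
  case 0 then show ?case by simp
next
  case (Suc N)
  then show ?case using keys_mult_lookup[of m I "I ^ N" k] assms by auto
qed



lemma high_key:
  fixes D T :: "'a::field mpoly"
  assumes "D \<noteq> 0" "T \<noteq> 0"
  shows "\<exists>m\<in>Poly_Mapping.keys (D * T). Poly_Mapping.lookup m k = deg D k + deg T k"
proof -
  define e where "e = deg D k"
  define d where "d = deg T k"
  define cD where "cD = coeff_in D k e"
  define I where "I = coeff_in T k d"
  define D' where "D' = D - cD * var k ^ e"
  define T' where "T' = T - I * var k ^ d"
  have cD0: "cD \<noteq> 0" unfolding cD_def e_def using coeff_in_nonzero[OF assms(1)] .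
  have I0: "I \<noteq> 0" unfolding I_def d_def using coeff_in_nonzero[OF assms(2)] .
  have D'k: "\<And>m. m \<in> Poly_Mapping.keys D' \<Longrightarrow> Poly_Mapping.lookup m k < e"
    unfolding D'_def cD_def e_def by (rule keys_rest)
  have T'k: "\<And>m. m \<in> Poly_Mapping.keys T' \<Longrightarrow> Poly_Mapping.lookup m k < d"
    unfolding T'_def I_def d_def by (rule keys_rest)
  have Topk: "\<And>m. m \<in> Poly_Mapping.keys (cD * var k ^ e) \<Longrightarrow> Poly_Mapping.lookup m k = e"
    unfolding cD_def by (rule keys_top)
  have Tk: "\<And>m. m \<in> Poly_Mapping.keys T \<Longrightarrow> Poly_Mapping.lookup m k \<le> d"
    unfolding d_def by (rule deg_ge)
  define J where "J = cD * var k ^ e * T' + D' * T"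
  have DT: "D * T = cD * I * var k ^ (e + d) + J"
    unfolding J_def D'_def T'_def by (simp add: algebra_simps power_add)
  have Jk: "Poly_Mapping.lookup m k < e + d" if "m \<in> Poly_Mapping.keys J" for m
  proof -
    have "m \<in> Poly_Mapping.keys (cD * var k ^ e * T') \<or> m \<in> Poly_Mapping.keys (D' * T)"
      using that keys_add[of "cD * var k ^ e * T'" "D' * T"] unfolding J_def by blast
    then show ?thesis
    proof
      assume "m \<in> Poly_Mapping.keys (cD * var k ^ e * T')"
      then show ?thesis using keys_mult_lookup[of m "cD * var k ^ e" T' k] Topk T'k by force
    next
      assume "m \<in> Poly_Mapping.keys (D' * T)"
      then show ?thesis using keys_mult_lookup[of m D' T k] D'k Tk by force
    qed
  qed
  have "cD * I \<noteq> 0" using cD0 I0 by simp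
  then obtain m0 where m0: "m0 \<in> Poly_Mapping.keys (cD * I)" by (metis keys_eq_empty ex_in_conv)
  have m0k: "Poly_Mapping.lookup m0 k = 0"
    using keys_mult_lookup[OF m0, of k] keys_coeff_in unfolding cD_def I_def by fastforce
  define m1 where "m1 = m0 + Poly_Mapping.single k (e + d)"
  have m1k: "Poly_Mapping.lookup m1 k = e + d" unfolding m1_def using m0k by (simp add: lookup_add)
  have "Poly_Mapping.lookup (cD * I * var k ^ (e + d)) m1 = Poly_Mapping.lookup (cD * I) m0"
    unfolding m1_def var_pow by (rule lookup_mult_single_shift)
  moreover have "Poly_Mapping.lookup J m1 = 0" using Jk[of m1] m1k by (auto simp: in_keys_iff)
  ultimately have "Poly_Mapping.lookup (D * T) m1 \<noteq> 0"
    using m0 unfolding DT by (simp add: lookup_add in_keys_iff)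
  then show ?thesis using m1k unfolding e_def d_def by (auto simp: in_keys_iff)
qed

lemma unique_rem:
  fixes T :: "'a::field mpoly"
  assumes "T \<noteq> 0" "Q1 * T + R1 = Q2 * T + R2"
    and "\<forall>m\<in>Poly_Mapping.keys R1. Poly_Mapping.lookup m k < deg T k"
    and "\<forall>m\<in>Poly_Mapping.keys R2. Poly_Mapping.lookup m k < deg T k"
  shows "R1 = R2"
proof (cases "Q1 = Q2")
  case True then show ?thesis using assms(2) by simp
next
  case False
  then have "Q1 - Q2 \<noteq> 0" by simp
  from high_key[OF this assms(1), of k] obtain m where
    m: "m \<in> Poly_Mapping.keys ((Q1 - Q2) * T)" "Poly_Mapping.lookup m k = deg (Q1 - Q2) k + deg T k"
    by blast
  have "(Q1 - Q2) * T = R2 - R1" using assms(2) by (simp add: algebra_simps)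
  then have "m \<in> Poly_Mapping.keys (R2 - R1)" using m(1) by simp
  then have "m \<in> Poly_Mapping.keys R2 \<union> Poly_Mapping.keys R1" using keys_diff[of R2 R1] by blast
  then show ?thesis using m(2) assms(3,4) by fastforce
qed



lemma pdiv_exists:
  fixes T :: "'a::field mpoly"
  assumes d1: "deg T k \<ge> 1"
  shows "deg P k = e \<Longrightarrow> e + 1 - deg T k \<le> N \<Longrightarrow>
    \<exists>Q R. coeff_in T k (deg T k) ^ N * P = Q * T + R
      \<and> (\<forall>m\<in>Poly_Mapping.keys R. Poly_Mapping.lookup m k < deg T k)
      \<and> vars R \<subseteq> vars P \<union> vars T"
proof (induction e arbitrary: P N rule: less_induct)
  case (less e)
  define d where "d = deg T k"
  define I where "I = coeff_in T k d"
  have T0: "T \<noteq> 0" using d1 by (auto)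
  have Ifree: "\<forall>m\<in>Poly_Mapping.keys I. Poly_Mapping.lookup m k = 0"
    unfolding I_def using keys_coeff_in by blast
  have IN: "\<And>m N. m \<in> Poly_Mapping.keys (I ^ N) \<Longrightarrow> Poly_Mapping.lookup m k = 0"
    using keys_pow_free[OF Ifree] by blast
  have varsI: "vars (I ^ n) \<subseteq> vars T" for n
    using vars_pow[of I n] vars_coeff_in[of T k d] unfolding I_def by blast
  obtain mT where mT: "mT \<in> Poly_Mapping.keys T" "Poly_Mapping.lookup mT k = d"
    using deg_attained[OF T0] unfolding d_def by blast
  have "k \<in> Poly_Mapping.keys mT" using mT(2) d1 unfolding d_def by (simp add: in_keys_iff)
  then have kT: "k \<in> vars T" using mT(1) unfolding vars_def by blast
  show ?case
  proof (cases "e < d")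
    case True
    have "\<forall>m\<in>Poly_Mapping.keys (I ^ N * P). Poly_Mapping.lookup m k < d"
    proof
      fix m assume "m \<in> Poly_Mapping.keys (I ^ N * P)"
      then obtain a b where "a \<in> Poly_Mapping.keys (I ^ N)" "b \<in> Poly_Mapping.keys P"
        "Poly_Mapping.lookup m k = Poly_Mapping.lookup a k + Poly_Mapping.lookup b k"
        using keys_mult_lookup by blast
      then show "Poly_Mapping.lookup m k < d"
        using IN deg_ge[of b P k] less.prems(1) True by fastforce
    qed
    moreover have "vars (I ^ N * P) \<subseteq> vars P \<union> vars T"
      using vars_mult[of "I ^ N" P] varsI by blast
    ultimately show ?thesis
      by (intro exI[of _ 0] exI[of _ "I ^ N * P"]) (simp add: I_def d_def)
  next
    case False
    then have ed: "d \<le> e" by simp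
    have N1: "N \<ge> 1" using less.prems(2) ed unfolding d_def by simp
    define c where "c = coeff_in P k e"
    define P' where "P' = P - c * var k ^ e"
    define T' where "T' = T - I * var k ^ d"
    define P1 where "P1 = I * P - c * var k ^ (e - d) * T"
    have xe: "(var k :: 'a mpoly) ^ e = var k ^ (e - d) * var k ^ d"
      using ed by (simp add: power_add[symmetric])
    have P1eq: "P1 = I * P' - c * var k ^ (e - d) * T'"
      unfolding P1_def P'_def T'_def xe by (simp add: algebra_simps)
    have P'k: "\<And>m. m \<in> Poly_Mapping.keys P' \<Longrightarrow> Poly_Mapping.lookup m k < e"
      unfolding P'_def c_def using keys_rest less.prems(1) by blast
    have T'k: "\<And>m. m \<in> Poly_Mapping.keys T' \<Longrightarrow> Poly_Mapping.lookup m k < d"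
      unfolding T'_def I_def d_def by (rule keys_rest)
    have cfree: "\<And>m. m \<in> Poly_Mapping.keys c \<Longrightarrow> Poly_Mapping.lookup m k = 0"
      unfolding c_def by (rule keys_coeff_in)
    have P1k: "Poly_Mapping.lookup m k < e" if "m \<in> Poly_Mapping.keys P1" for m
    proof -
      have "m \<in> Poly_Mapping.keys (I * P') \<or> m \<in> Poly_Mapping.keys (c * var k ^ (e - d) * T')"
        using that keys_diff[of "I * P'" "c * var k ^ (e - d) * T'"] unfolding P1eq by blast
      then show ?thesis
      proof
        assume "m \<in> Poly_Mapping.keys (I * P')"
        then show ?thesis using keys_mult_lookup[of m I P' k] Ifree P'k by force
      next
        assume a: "m \<in> Poly_Mapping.keys (c * var k ^ (e - d) * T')"
        have "Poly_Mapping.lookup m' k = e - d" if "m' \<in> Poly_Mapping.keys (c * var k ^ (e - d))" for m'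
          using keys_mult_lookup[OF that, of k] cfree keys_var_pow by force
        then show ?thesis using keys_mult_lookup[OF a, of k] T'k ed by force
      qed
    qed
    have dP1: "deg P1 k < e"
    proof -
      have "deg P1 k \<le> e - 1" unfolding deg_le_iff using P1k by force
      then show ?thesis using ed d1 unfolding d_def by linarith
    qed
    have "deg P1 k + 1 - deg T k \<le> N - 1"
      using dP1 less.prems(2) less.prems(1) N1 unfolding d_def by linarith
    from less.IH[OF dP1 refl this] obtain Q1 R where
      QR: "I ^ (N - 1) * P1 = Q1 * T + R"
          "\<forall>m\<in>Poly_Mapping.keys R. Poly_Mapping.lookup m k < deg T k"
          "vars R \<subseteq> vars P1 \<union> vars T"
      unfolding I_def d_def by blast
    have "I ^ N * P = I ^ (N - 1) * (I * P)"
    proof -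
      obtain N' where "N = Suc N'" using N1 by (cases N) auto
      then show ?thesis by (simp add: algebra_simps)
    qed
    also have "I * P = P1 + c * var k ^ (e - d) * T" unfolding P1_def by simp
    finally have "I ^ N * P = (Q1 + I ^ (N - 1) * c * var k ^ (e - d)) * T + R"
      using QR(1) by (simp add: algebra_simps)
    moreover have "vars P1 \<subseteq> vars P \<union> vars T"
    proof -
      have "vars P1 \<subseteq> vars (I * P) \<union> vars (c * var k ^ (e - d) * T)"
        unfolding P1_def by (rule vars_diff)
      also have "\<dots> \<subseteq> vars I \<union> vars P \<union> (vars c \<union> vars (var k ^ (e - d) :: 'a mpoly) \<union> vars T)"
        using vars_mult[of I P] vars_mult[of "c * var k ^ (e - d)" T] vars_mult[of c "var k ^ (e - d)"]
        by blast
      also have "\<dots> \<subseteq> vars P \<union> vars T"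
        using vars_coeff_in[of T k d] vars_coeff_in[of P k e] vars_var_pow[of k "e - d"] kT
        unfolding I_def c_def by auto
      finally show ?thesis .
    qed
    ultimately show ?thesis using QR(2,3) unfolding I_def d_def by blast
  qed
qed



lemma lv_in_vars: "vars T \<noteq> {} \<Longrightarrow> lv T \<in> vars T"
  unfolding lv_def using finite_vars by (rule Max_in) 

lemma deg_lv_pos:
  assumes "vars T \<noteq> {}"
  shows "deg T (lv T) \<ge> 1"
proof -
  obtain m where m: "m \<in> Poly_Mapping.keys T" "lv T \<in> Poly_Mapping.keys m"
    using lv_in_vars[OF assms] unfolding vars_def by blast
  then have "Poly_Mapping.lookup m (lv T) \<ge> 1" by (simp add: in_keys_iff)
  then show ?thesis using deg_ge[OF m(1), of "lv T"] by linarith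
qed

lemma vars_prem:
  fixes P T :: "'a::field mpoly"
  assumes "vars T \<noteq> {}"
  shows "vars (prem P T) \<subseteq> vars P \<union> vars T"
proof -
  define k where "k = lv T"
  define d where "d = deg T k"
  define N where "N = deg P k + 1 - d"
  define I where "I = coeff_in T k d"
  have d1: "deg T k \<ge> 1" unfolding k_def by (rule deg_lv_pos[OF assms])
  have T0: "T \<noteq> 0" using d1 by auto
  obtain Q R where QR: "I ^ N * P = Q * T + R"
      "\<forall>m\<in>Poly_Mapping.keys R. Poly_Mapping.lookup m k < deg T k"
      "vars R \<subseteq> vars P \<union> vars T"
    using pdiv_exists[OF d1, of P "deg P k" N] unfolding N_def I_def d_def by auto
  have dR: "deg R k < d"
  proof -
    have "deg R k \<le> d - 1" unfolding deg_le_iff using QR(2) unfolding d_def by force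
    then show ?thesis using d1 unfolding d_def by linarith
  qed
  have "prem P T = R"
    unfolding prem_def ini_def k_def[symmetric] d_def[symmetric] I_def[symmetric] N_def[symmetric]
  proof (rule the_equality)
    show "\<exists>Q. I ^ N * P = Q * T + R \<and> deg R k < d" using QR(1) dR by blast
  next
    fix R' assume "\<exists>Q. I ^ N * P = Q * T + R' \<and> deg R' k < d"
    then obtain Q' where Q': "I ^ N * P = Q' * T + R'" "deg R' k < d" by blast
    have "\<forall>m\<in>Poly_Mapping.keys R'. Poly_Mapping.lookup m k < deg T k"
      using deg_ge[of _ R' k] Q'(2) unfolding d_def by (meson le_less_trans)
    then show "R' = R"
      using unique_rem[OF T0, of Q' R' Q R k] Q'(1) QR(1,2) by simp
  qed
  then show ?thesis using QR(3) by simp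
qed

lemma vars_ini: "vars (ini (T::'a::comm_ring_1 mpoly)) \<subseteq> vars T"
  unfolding ini_def by (rule vars_coeff_in)

lemma vars_tail:
  fixes T :: "'a::comm_ring_1 mpoly"
  assumes "vars T \<noteq> {}"
  shows "vars (tail T) \<subseteq> vars T"
proof -
  have "vars (tail T) \<subseteq> vars T \<union> (vars (ini T) \<union> vars (var (lv T) ^ deg T (lv T) :: 'a mpoly))"
    unfolding tail_def using vars_diff[of T "ini T * var (lv T) ^ deg T (lv T)"]
      vars_mult[of "ini T" "var (lv T) ^ deg T (lv T)"] by blast
  then show ?thesis using vars_ini[of T] vars_var_pow[of "lv T" "deg T (lv T)", where 'a='a]
      lv_in_vars[OF assms] by blast
qed

lemma subgraph_iff:
  "subgraph_of P F \<longleftrightarrow> (\<forall>G\<in>P. vars G \<subseteq> graph_verts F \<and>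
      (\<forall>a\<in>vars G. \<forall>b\<in>vars G. a \<noteq> b \<longrightarrow> (a, b) \<in> graph_edges F))"
  unfolding subgraph_of_def graph_verts_def vars_set_def graph_edges_def by blast

lemma clique_level:
  assumes ch: "chordal_peo F" and sg: "subgraph_of P F"
    and A: "A \<in> level P i" and B: "B \<in> level P i"
  shows "vars A \<union> vars B \<subseteq> graph_verts F"
    and "\<And>a b. a \<in> vars A \<union> vars B \<Longrightarrow> b \<in> vars A \<union> vars B \<Longrightarrow> a \<noteq> b \<Longrightarrow> (a, b) \<in> graph_edges F"
proof -
  have sgi: "\<forall>G\<in>P. vars G \<subseteq> graph_verts F \<and>
      (\<forall>a\<in>vars G. \<forall>b\<in>vars G. a \<noteq> b \<longrightarrow> (a, b) \<in> graph_edges F)"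
    using sg subgraph_iff by blast
  have AP: "A \<in> P" "vars A \<noteq> {}" "lv A = i" using A unfolding level_def by auto
  have BP: "B \<in> P" "vars B \<noteq> {}" "lv B = i" using B unfolding level_def by auto
  show vv: "vars A \<union> vars B \<subseteq> graph_verts F" using sgi AP(1) BP(1) by blast
  have iv: "i \<in> graph_verts F" using lv_in_vars[OF AP(2)] AP(3) vv by auto
  define C where "C = insert i {u. (u, i) \<in> graph_edges F \<and> u < i}"
  have cl: "\<forall>a\<in>C. \<forall>b\<in>C. a \<noteq> b \<longrightarrow> (a, b) \<in> graph_edges F"
    using ch iv unfolding chordal_peo_def Let_def C_def by blast
  have sub: "vars G \<subseteq> C" if "G \<in> P" "vars G \<noteq> {}" "lv G = i" for G
  proof
    fix a assume a: "a \<in> vars G"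
    have ai: "a \<le> i" using a that(3) finite_vars unfolding lv_def by (metis Max_ge)
    show "a \<in> C"
    proof (cases "a = i")
      case True then show ?thesis unfolding C_def by simp
    next
      case False
      have "i \<in> vars G" using lv_in_vars[OF that(2)] that(3) by simp
      then have "(a, i) \<in> graph_edges F" using sgi that(1) a False by blast
      then show ?thesis using ai False unfolding C_def by simp
    qed
  qed
  have "vars A \<union> vars B \<subseteq> C" using sub AP BP by blast
  then show "\<And>a b. a \<in> vars A \<union> vars B \<Longrightarrow> b \<in> vars A \<union> vars B \<Longrightarrow> a \<noteq> b \<Longrightarrow> (a, b) \<in> graph_edges F"
    using cl by blast
qed

theorem theorem4p3:
  fixes F :: "'a::field mpoly set" and n :: nat
  assumes "\<forall>f\<in>F. vars f \<subseteq> {1..n}"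
    and "chordal_peo F"
    and "(P, Q, i) \<in> wang_tree F n"
  shows "subgraph_of P F"
  using assms(3)
proof (induction rule: wang_tree.induct)
  case root
  then show ?case unfolding subgraph_of_def by simp
next
  case (left P Q i T)
  have sgi: "\<forall>G\<in>P. vars G \<subseteq> graph_verts F \<and>
      (\<forall>a\<in>vars G. \<forall>b\<in>vars G. a \<noteq> b \<longrightarrow> (a, b) \<in> graph_edges F)"
    using left.IH subgraph_iff by blast
  have TP: "T \<in> P" "vars T \<noteq> {}" using left.hyps(4) unfolding level_def by auto
  show ?case unfolding subgraph_iff
  proof
    fix G assume G: "G \<in> P - level P i \<union> {T} \<union> {prem P' T |P'. P' \<in> level P i}"
    show "vars G \<subseteq> graph_verts F \<and>
      (\<forall>a\<in>vars G. \<forall>b\<in>vars G. a \<noteq> b \<longrightarrow> (a, b) \<in> graph_edges F)"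
    proof (cases "G \<in> P")
      case True then show ?thesis using sgi by blast
    next
      case False
      then obtain P' where P': "P' \<in> level P i" "G = prem P' T" using G TP by blast
      have vG: "vars G \<subseteq> vars P' \<union> vars T" using vars_prem[OF TP(2)] P'(2) by blast
      show ?thesis
        using clique_level[OF assms(2) left.IH P'(1) left.hyps(4)] vG by blast
    qed
  qed
next
  case (right P Q i T)
  have sgi: "\<forall>G\<in>P. vars G \<subseteq> graph_verts F \<and>
      (\<forall>a\<in>vars G. \<forall>b\<in>vars G. a \<noteq> b \<longrightarrow> (a, b) \<in> graph_edges F)"
    using right.IH subgraph_iff by blast
  have TP: "T \<in> P" "vars T \<noteq> {}" using right.hyps(4) unfolding level_def by auto
  have vT: "vars T \<subseteq> graph_verts F \<and>
      (\<forall>a\<in>vars T. \<forall>b\<in>vars T. a \<noteq> b \<longrightarrow> (a, b) \<in> graph_edges F)"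
    using sgi TP(1) by blast
  show ?case unfolding subgraph_iff
  proof
    fix G assume G: "G \<in> P - {T} \<union> {ini T, tail T}"
    show "vars G \<subseteq> graph_verts F \<and>
      (\<forall>a\<in>vars G. \<forall>b\<in>vars G. a \<noteq> b \<longrightarrow> (a, b) \<in> graph_edges F)"
    proof (cases "G \<in> P")
      case True then show ?thesis using sgi by blast
    next
      case False
      then have "vars G \<subseteq> vars T" using G vars_ini[of T] vars_tail[OF TP(2)] by auto
      then show ?thesis using vT by blast
    qed
  qed
next
  case (down P Q i)
  then show ?case by simp
qed

end
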